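(* Let $(s_n)_{n\ge1}$ be a sequence of integers with $s_n\ge4$ for all $n$ and $s_n\to\infty$. Put \[ s_0=\liminf_{n\to\infty}\frac{\log(s_1\cdots s_n)}{2\log(s_1\cdots s_n)+\log s_{n+1}}. \] Then for every integer $N\ge2$, \[ \dim_H\{x\in(0,1]:\ \forall n\in\mathbb N,\ s_n\le a_n(x)\le Ns_n-1\}=s_0. \]
   Context: Lüroth digits: for $x\in(0,1]$, $a_1(x)=[1/x]+1$, $\mathcal L(x)=[1/x]([1/x]+1)x-[1/x]$ ($[t]$ = integer part), $a_{n+1}(x)=a_1(\mathcal L^n(x))$, so that $x=\frac1{a_1}+\sum_{n\ge2}\frac{1}{a_1(a_1-1)\cdots a_{n-1}(a_{n-1}-1)a_n}$. *)

theory Defs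
  imports "HOL-Analysis.Analysis"
begin

definition hausdorff_pre :: "real \<Rightarrow> real \<Rightarrow> 'a::metric_space set \<Rightarrow> ennreal" where
  "hausdorff_pre s \<delta> E =
     (INF U \<in> {U :: nat \<Rightarrow> 'a set. E \<subseteq> (\<Union>i. U i) \<and> (\<forall>i. bounded (U i) \<and> diameter (U i) \<le> \<delta>)}.
        (\<Sum>i. ennreal (diameter (U i) powr s)))"

definition hausdorff_measure :: "real \<Rightarrow> 'a::metric_space set \<Rightarrow> ennreal" where
  "hausdorff_measure s E = (SUP \<delta> \<in> {0<..}. hausdorff_pre s \<delta> E)"

definition hausdorff_dim :: "'a::metric_space set \<Rightarrow> real" where
  "hausdorff_dim E = Inf {s. 0 \<le> s \<and> hausdorff_measure s E = 0}"

definition luroth_a1 :: "real \<Rightarrow> int" where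
  "luroth_a1 x = \<lfloor>1 / x\<rfloor> + 1"

definition luroth_map :: "real \<Rightarrow> real" where
  "luroth_map x = of_int \<lfloor>1 / x\<rfloor> * (of_int \<lfloor>1 / x\<rfloor> + 1) * x - of_int \<lfloor>1 / x\<rfloor>"

definition luroth_digit :: "nat \<Rightarrow> real \<Rightarrow> int" where
  "luroth_digit n x = luroth_a1 ((luroth_map ^^ (n - 1)) x)"

end

theory Submission
  imports Defs
begin

fun cc :: "int list \<Rightarrow> real" where
  "cc [] = 0" | "cc (a#w) = 1 / of_int a + cc w / (of_int a * (of_int a - 1))"
fun cL :: "int list \<Rightarrow> real" where
  "cL [] = 1" | "cL (a#w) = cL w / (of_int a * (of_int a - 1))"

definition good :: "int list \<Rightarrow> bool" where "good w = (\<forall>a\<in>set w. a \<ge> 2)"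

lemma good_Cons[simp]: "good (a#w) = (a \<ge> 2 \<and> good w)" by (auto simp: good_def)
lemma good_append[simp]: "good (u@v) = (good u \<and> good v)" by (auto simp: good_def)
lemma good_Nil[simp]: "good []" by (simp add: good_def)

lemma cyl_bounds: "good w \<Longrightarrow> 0 \<le> cc w \<and> 0 < cL w \<and> cc w + cL w \<le> 1"
proof (induction w)
  case Nil then show ?case by simp
next
  case (Cons a w)
  then have a: "real_of_int a \<ge> 2" and IH: "0 \<le> cc w" "0 < cL w" "cc w + cL w \<le> 1" by auto
  have p: "real_of_int a * (real_of_int a - 1) > 0" using a by simp
  have "cc w / (of_int a * (of_int a - 1)) + cL w / (of_int a * (of_int a - 1)) \<le> 1 / (of_int a * (of_int a - 1))"
    using IH p by (simp add: add_divide_distrib[symmetric] divide_right_mono)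
  moreover have "1 / real_of_int a + 1 / (of_int a * (of_int a - 1)) \<le> 1"
    using a by (simp add: field_simps)
  ultimately show ?case using IH p a by (auto intro!: divide_nonneg_pos)
qed

lemma cc_append: "cc (u@v) = cc u + cL u * cc v"
  by (induction u) (simp_all add: add_divide_distrib)
lemma cL_append: "cL (u@v) = cL u * cL v"
  by (induction u) (simp_all add: field_simps)

lemma luroth_a1_eq:
  assumes "a \<ge> 2" "1 / real_of_int a < x" "x \<le> 1 / (real_of_int a - 1)"
  shows "luroth_a1 x = a" "luroth_map x = real_of_int a * (real_of_int a - 1) * x - (real_of_int a - 1)"
proof -
  have a: "real_of_int a \<ge> 2" using assms by simp
  have xpos: "x > 0" using assms(2) a by (smt (verit) divide_pos_pos)
  have "1 / x < real_of_int a" using assms(2) xpos a by (simp add: field_simps)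
  moreover have "real_of_int a - 1 \<le> 1 / x" using assms(3) xpos a by (simp add: field_simps)
  ultimately have fl: "\<lfloor>1/x\<rfloor> = a - 1" by (simp add: floor_eq_iff)
  show "luroth_a1 x = a" by (simp add: luroth_a1_def fl)
  show "luroth_map x = real_of_int a * (real_of_int a - 1) * x - (real_of_int a - 1)"
    by (simp add: luroth_map_def fl)
qed

lemma luroth_digit_Suc_Suc: "luroth_digit (Suc (Suc i)) x = luroth_digit (Suc i) (luroth_map x)"
  by (simp only: luroth_digit_def diff_Suc_1 funpow_Suc_right comp_def)

lemma cyl_forward:
  assumes "good w" "cc w < x" "x \<le> cc w + cL w"
  shows "(\<forall>i<length w. luroth_digit (Suc i) x = w!i) \<and> (luroth_map ^^ length w) x = (x - cc w) / cL w"
  using assms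
proof (induction w arbitrary: x)
  case Nil then show ?case by simp
next
  case (Cons a w)
  have a: "real_of_int a \<ge> 2" "a \<ge> 2" and gw: "good w" using Cons by auto
  note B = cyl_bounds[OF gw]
  define d where "d = real_of_int a * (real_of_int a - 1)"
  have d: "d > 0" using a by (simp add: d_def)
  have x1: "x = 1 / real_of_int a + (x - 1 / real_of_int a)" by simp
  have "cc w / d < x - 1/real_of_int a" using Cons.prems by (simp add: d_def)
  then have lo: "cc w < (x - 1/real_of_int a) * d" using d by (simp add: field_simps)
  have "(cc w + cL w) / d \<ge> x - 1/real_of_int a" using Cons.prems by (simp add: d_def add_divide_distrib)
  then have hi: "(x - 1/real_of_int a) * d \<le> cc w + cL w" using d by (simp add: field_simps)
  have "1 / real_of_int a < x" using lo B d a by (smt (verit) mult_nonpos_nonneg)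
  moreover have "x \<le> 1 / (real_of_int a - 1)"
  proof -
    have "(x - 1/real_of_int a) * d \<le> 1" using hi B by linarith
    then have "x - 1/real_of_int a \<le> 1 / d" using d by (simp add: field_simps)
    moreover have "1/real_of_int a + 1/d = 1 / (real_of_int a - 1)" using a by (simp add: d_def field_simps)
    ultimately show ?thesis by linarith
  qed
  ultimately have A1: "luroth_a1 x = a" and LM: "luroth_map x = d * x - (real_of_int a - 1)"
    using luroth_a1_eq[OF a(2)] by (auto simp: d_def)
  have "d / real_of_int a = real_of_int a - 1" using a by (simp add: d_def)
  moreover have "(x - 1/real_of_int a) * d = d * x - d / real_of_int a" by (simp add: algebra_simps)
  ultimately have LM': "luroth_map x = (x - 1/real_of_int a) * d" using LM by simp
  have "cc w < luroth_map x" "luroth_map x \<le> cc w + cL w" using lo hi LM' by auto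
  note IH = Cons.IH[OF gw this]
  have dig: "\<forall>i<length (a#w). luroth_digit (Suc i) x = (a#w)!i"
  proof (intro allI impI)
    fix i assume "i < length (a#w)"
    show "luroth_digit (Suc i) x = (a#w)!i"
    proof (cases i)
      case 0 then show ?thesis using A1 by (simp add: luroth_digit_def)
    next
      case (Suc j) then show ?thesis using IH \<open>i < length (a#w)\<close> by (simp add: luroth_digit_Suc_Suc)
    qed
  qed
  have "(luroth_map ^^ length (a#w)) x = (luroth_map ^^ length w) (luroth_map x)"
    by (simp only: length_Cons funpow_Suc_right comp_def)
  also have "\<dots> = (luroth_map x - cc w) / cL w" using IH by simp
  also have "\<dots> = (x - cc (a#w)) / cL (a#w)"
  proof -
    have "luroth_map x / d = x - 1/real_of_int a" using LM' d by simp
    then have "x - cc (a#w) = (luroth_map x - cc w) / d" by (simp add: d_def diff_divide_distrib)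
    moreover have "cL (a#w) = cL w / d" by (simp add: d_def)
    ultimately show ?thesis using d B by simp
  qed
  finally show ?case using dig by simp
qed
lemma luroth_step:
  assumes "0 < x" "x \<le> 1"
  shows "luroth_a1 x \<ge> 2 \<and> 0 < luroth_map x \<and> luroth_map x \<le> 1 \<and>
    x = 1 / of_int (luroth_a1 x) + luroth_map x / (of_int (luroth_a1 x) * (of_int (luroth_a1 x) - 1))"
proof -
  define q where "q = \<lfloor>1/x\<rfloor>"
  have "1/x \<ge> 1" using assms by simp
  then have q1: "q \<ge> 1" by (simp add: q_def)
  have qle: "real_of_int q \<le> 1/x" "1/x < real_of_int q + 1" by (simp_all add: q_def)
  have q1r: "real_of_int q \<ge> 1" using q1 by simp
  have A: "luroth_a1 x = q + 1" by (simp add: luroth_a1_def q_def)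
  have LM: "luroth_map x = real_of_int q * (real_of_int q + 1) * x - real_of_int q" by (simp add: luroth_map_def q_def)
  have h1: "real_of_int q * x \<le> 1" using qle(1) assms by (simp add: field_simps)
  have h2: "1 < (real_of_int q + 1) * x" using qle(2) assms by (simp add: field_simps)
  have e1: "luroth_map x = real_of_int q * ((real_of_int q + 1) * x - 1)" unfolding LM by (simp add: algebra_simps)
  have "0 < luroth_map x" unfolding e1 using h2 q1r by simp
  have e2: "luroth_map x = (real_of_int q + 1) * (real_of_int q * x) - real_of_int q" unfolding LM by (simp add: algebra_simps)
  have "(real_of_int q + 1) * (real_of_int q * x) \<le> (real_of_int q + 1) * 1"
    using h1 q1r by (intro mult_left_mono) auto
  then have "luroth_map x \<le> 1" unfolding e2 by simp
  moreover note \<open>0 < luroth_map x\<close>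
  moreover have "x = 1 / of_int (luroth_a1 x) + luroth_map x / (of_int (luroth_a1 x) * (of_int (luroth_a1 x) - 1))"
  proof -
    have p: "(real_of_int q + 1) * real_of_int q > 0" using q1r by simp
    have "luroth_map x = ((real_of_int q + 1) * real_of_int q) * (x - 1 / (real_of_int q + 1))"
    proof -
      have "((real_of_int q + 1) * real_of_int q) * (1 / (real_of_int q + 1)) = real_of_int q" using q1r by simp
      then show ?thesis unfolding LM by (simp add: right_diff_distrib)
    qed
    then have "luroth_map x / ((real_of_int q + 1) * real_of_int q) = x - 1 / (real_of_int q + 1)"
      using p q1 q1r by auto
    then show ?thesis unfolding A by simp
  qed
  ultimately show ?thesis using A q1 by simp
qed

definition pre :: "nat \<Rightarrow> real \<Rightarrow> int list" where
  "pre n x = map (\<lambda>i. luroth_digit (Suc i) x) [0..<n]"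

lemma length_pre[simp]: "length (pre n x) = n" by (simp add: pre_def)
lemma nth_pre[simp]: "i < n \<Longrightarrow> pre n x ! i = luroth_digit (Suc i) x" by (simp add: pre_def)

lemma luroth_digit_1[simp]: "luroth_digit (Suc 0) x = luroth_a1 x" by (simp add: luroth_digit_def)

lemma pre_Suc: "pre (Suc n) x = luroth_a1 x # pre n (luroth_map x)"
proof (rule nth_equalityI)
  fix i assume "i < length (pre (Suc n) x)"
  then show "pre (Suc n) x ! i = (luroth_a1 x # pre n (luroth_map x)) ! i"
  proof (cases i)
    case 0 then show ?thesis by simp
  next
    case (Suc j)
    have "j < n" using \<open>i < _\<close> Suc by simp
    then show ?thesis unfolding Suc nth_Cons_Suc by (simp add: luroth_digit_Suc_Suc)
  qed
qed simp

lemma pre_Suc': "pre (Suc n) x = pre n x @ [luroth_digit (Suc n) x]"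
  by (simp add: pre_def)

lemma cyl_backward:
  assumes "0 < x" "x \<le> 1"
  shows "good (pre n x) \<and> 0 < (luroth_map ^^ n) x \<and> (luroth_map ^^ n) x \<le> 1 \<and>
    x = cc (pre n x) + cL (pre n x) * (luroth_map ^^ n) x"
  using assms
proof (induction n arbitrary: x)
  case 0 then show ?case by (simp add: pre_def)
next
  case (Suc n)
  note st = luroth_step[OF Suc.prems]
  note IH = Suc.IH[of "luroth_map x"]
  have IH': "good (pre n (luroth_map x)) \<and> 0 < (luroth_map ^^ n) (luroth_map x) \<and> (luroth_map ^^ n) (luroth_map x) \<le> 1 \<and>
    luroth_map x = cc (pre n (luroth_map x)) + cL (pre n (luroth_map x)) * (luroth_map ^^ n) (luroth_map x)"
    using IH st by blast
  have fp: "(luroth_map ^^ Suc n) x = (luroth_map ^^ n) (luroth_map x)" by (simp only: funpow_Suc_right comp_def)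
  define a where "a = luroth_a1 x"
  define u where "u = pre n (luroth_map x)"
  define y where "y = (luroth_map ^^ n) (luroth_map x)"
  define d where "d = real_of_int a * (real_of_int a - 1)"
  have "x = 1 / real_of_int a + luroth_map x / d" using st by (simp add: a_def d_def)
  also have "luroth_map x = cc u + cL u * y" using IH' by (simp add: u_def y_def)
  finally have "x = cc (a # u) + cL (a # u) * y" by (simp add: d_def add_divide_distrib)
  then show ?case unfolding fp pre_Suc using IH' st by (simp add: a_def u_def y_def)
qed

lemma cl_inside:
  assumes "good u" "a \<ge> 3" "cc (u@[a]) \<le> x" "x \<le> cc (u@[a]) + cL (u@[a])"
  shows "cc u < x \<and> x < cc u + cL u"
proof -
  note B = cyl_bounds[OF assms(1)]
  have a: "real_of_int a \<ge> 3" using assms by simp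
  have c: "cc (u@[a]) = cc u + cL u * (1 / real_of_int a)" by (simp add: cc_append)
  have l: "cc (u@[a]) + cL (u@[a]) = cc u + cL u * (1 / (real_of_int a - 1))"
  proof -
    have "1 / real_of_int a + 1 / (real_of_int a * (real_of_int a - 1)) = 1 / (real_of_int a - 1)"
      using a by (simp add: field_simps)
    moreover have "cc (u@[a]) + cL (u@[a]) = cc u + cL u * (1 / real_of_int a + 1 / (real_of_int a * (real_of_int a - 1)))"
      by (simp add: cc_append cL_append distrib_left)
    ultimately show ?thesis by simp
  qed
  have "cL u * (1 / real_of_int a) > 0" using B a by simp
  moreover have "cL u * (1 / (real_of_int a - 1)) < cL u * 1" using B a by (intro mult_strict_left_mono) auto
  ultimately show ?thesis using assms(3,4) c l by linarith
qed

locale lur =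
  fixes s :: "nat \<Rightarrow> int" and N :: int
  assumes s_ge: "\<And>n. n \<ge> 1 \<Longrightarrow> s n \<ge> 4"
    and N_ge: "N \<ge> 2"
begin

definition W :: "nat \<Rightarrow> int list set" where
  "W n = {w. length w = n \<and> (\<forall>i<n. s (Suc i) \<le> w!i \<and> w!i \<le> N * s (Suc i) - 1)}"

definition R :: "nat \<Rightarrow> int set" where "R k = {s k .. N * s k - 1}"

definition E :: "real set" where
  "E = {x. 0 < x \<and> x \<le> 1 \<and> (\<forall>n\<ge>1. s n \<le> luroth_digit n x \<and> luroth_digit n x \<le> N * s n - 1)}"

definition K :: "real set" where
  "K = {x. \<forall>n. \<exists>w\<in>W n. cc w \<le> x \<and> x \<le> cc w + cL w}"

lemma s_Suc: "s (Suc i) \<ge> 4" using s_ge by simp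

lemma R_sub: "a \<in> R (Suc i) \<Longrightarrow> a \<ge> 4" using s_Suc[of i] by (simp add: R_def)

lemma W_good: "w \<in> W n \<Longrightarrow> good w"
proof -
  assume w: "w \<in> W n"
  have "a \<ge> 2" if "a \<in> set w" for a
  proof -
    obtain i where "i < length w" "w!i = a" using \<open>a \<in> set w\<close> by (auto simp: in_set_conv_nth)
    then show ?thesis using w s_Suc[of i] by (auto simp: W_def)
  qed
  then show ?thesis by (auto simp: good_def)
qed

lemma W_0[simp]: "W 0 = {[]}" by (auto simp: W_def)

lemma W_Suc: "W (Suc n) = (\<lambda>(u,a). u@[a]) ` (W n \<times> R (Suc n))"
proof (intro set_eqI iffI)
  fix w assume w: "w \<in> W (Suc n)"
  then have "length w = Suc n" by (simp add: W_def)
  then have e: "w = butlast w @ [w!n]"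
    by (metis append_butlast_last_id diff_Suc_1 last_conv_nth length_0_conv nat.distinct(1))
  have "butlast w \<in> W n" using w by (auto simp: W_def nth_butlast)
  moreover have "w!n \<in> R (Suc n)" using w by (auto simp: W_def R_def)
  ultimately show "w \<in> (\<lambda>(u,a). u@[a]) ` (W n \<times> R (Suc n))" using e
    by (intro image_eqI[of _ _ "(butlast w, w!n)"]) auto
next
  fix w assume "w \<in> (\<lambda>(u,a). u@[a]) ` (W n \<times> R (Suc n))"
  then obtain u a where "w = u@[a]" "u \<in> W n" "a \<in> R (Suc n)" by auto
  then show "w \<in> W (Suc n)" by (auto simp: W_def R_def nth_append less_Suc_eq)
qed

lemma finite_R: "finite (R k)" by (simp add: R_def)
lemma card_R: "card (R (Suc k)) = nat ((N - 1) * s (Suc k))"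
  by (simp add: R_def algebra_simps)

lemma finite_W: "finite (W n)"
  by (induction n) (simp_all add: W_Suc finite_R)

lemma card_W: "card (W n) = (\<Prod>i<n. nat ((N - 1) * s (Suc i)))"
proof (induction n)
  case 0 then show ?case by simp
next
  case (Suc n)
  have "inj_on (\<lambda>(u,a). u@[a]) (W n \<times> R (Suc n))" by (auto simp: inj_on_def)
  then have "card (W (Suc n)) = card (W n \<times> R (Suc n))" by (simp add: W_Suc card_image)
  also have "\<dots> = card (W n) * card (R (Suc n))" by (simp add: card_cartesian_product)
  finally show ?case using Suc card_R by simp
qed

lemma pre_W: "x \<in> E \<Longrightarrow> pre n x \<in> W n"
  by (auto simp: E_def W_def)

lemma E_sub_K: "E \<subseteq> K"
proof
  fix x assume x: "x \<in> E"
  then have x01: "0 < x" "x \<le> 1" by (auto simp: E_def)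
  show "x \<in> K" unfolding K_def
  proof (intro CollectI allI)
    fix n
    note b = cyl_backward[OF x01, of n]
    have "cL (pre n x) > 0" using cyl_bounds b by blast
    then have "cc (pre n x) \<le> x \<and> x \<le> cc (pre n x) + cL (pre n x)"
    proof -
      define y where "y = (luroth_map ^^ n) x"
      have "cL (pre n x) * y \<le> cL (pre n x) * 1" using b \<open>cL (pre n x) > 0\<close> by (intro mult_left_mono) (auto simp: y_def)
      moreover have "cL (pre n x) * y \<ge> 0" using b \<open>cL (pre n x) > 0\<close> by (simp add: y_def)
      ultimately show ?thesis using b by (simp add: y_def)
    qed
    then show "\<exists>w\<in>W n. cc w \<le> x \<and> x \<le> cc w + cL w" using pre_W[OF x] by blast
  qed
qed

lemma K_inside: 
  assumes "x \<in> K" shows "\<exists>u\<in>W n. cc u < x \<and> x < cc u + cL u"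
proof -
  obtain w where w: "w \<in> W (Suc n)" "cc w \<le> x" "x \<le> cc w + cL w" using assms by (auto simp: K_def)
  then obtain u a where ua: "w = u@[a]" "u \<in> W n" "a \<in> R (Suc n)" by (auto simp: W_Suc)
  have "a \<ge> 3" using R_sub[OF ua(3)] by simp
  then show ?thesis using cl_inside[OF W_good[OF ua(2)]] w ua by blast
qed

lemma K_sub_E: "K \<subseteq> E"
proof
  fix x assume x: "x \<in> K"
  obtain u where "u \<in> W 0" "cc u < x" "x < cc u + cL u" using K_inside[OF x] by blast
  then have x01: "0 < x" "x \<le> 1" by auto
  have "s m \<le> luroth_digit m x \<and> luroth_digit m x \<le> N * s m - 1" if m1: "m \<ge> 1" for m
  proof -
    obtain u where u: "u \<in> W m" "cc u < x" "x < cc u + cL u" using K_inside[OF x] by blast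
    have lu: "length u = m" using u by (simp add: W_def)
    have "\<forall>i<length u. luroth_digit (Suc i) x = u!i" using cyl_forward[OF W_good[OF u(1)]] u by auto
    moreover obtain k where k: "m = Suc k" using m1 by (cases m) auto
    ultimately have "luroth_digit (Suc (m - 1)) x = u ! (m - 1)" using lu by simp
    then have "luroth_digit m x = u ! (m - 1)" using that by simp
    moreover have "s (Suc k) \<le> u!k \<and> u!k \<le> N * s (Suc k) - 1" using u(1) k by (auto simp: W_def)
    ultimately show ?thesis using k by simp
  qed
  then show "x \<in> E" using x01 by (auto simp: E_def)
qed

lemma E_eq_K: "E = K" using E_sub_K K_sub_E by blast

lemma compact_E: "compact E"
proof -
  have "K = (\<Inter>n. \<Union>w\<in>W n. {cc w .. cc w + cL w})" by (auto simp: K_def)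
  moreover have "closed (\<Inter>n. \<Union>w\<in>W n. {cc w .. cc w + cL w})"
    using finite_W by (intro closed_INT closed_UN) auto
  ultimately have "closed E" using E_eq_K by simp
  moreover have "bounded E" by (rule bounded_subset[of "{0..1}"]) (auto simp: E_def)
  ultimately show ?thesis by (simp add: compact_eq_bounded_closed)
qed

lemma pre_eq:
  assumes "w \<in> W n" "cc w < x" "x < cc w + cL w"
  shows "pre n x = w"
proof -
  have lw: "length w = n" using assms by (simp add: W_def)
  have "\<forall>i<length w. luroth_digit (Suc i) x = w!i" using cyl_forward[OF W_good[OF assms(1)]] assms by auto
  then show ?thesis using lw by (intro nth_equalityI) auto
qed

lemma ext:
  assumes w: "w \<in> W n" shows "\<exists>x\<in>E. pre n x = w"
proof -
  define d where "d i = (if i < n then w!i else s (Suc i))" for i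
  define wd where "wd m = map d [0..<m]" for m
  have wdW: "wd m \<in> W m" for m
  proof -
    have "s (Suc i) \<le> d i \<and> d i \<le> N * s (Suc i) - 1" for i
    proof (cases "i < n")
      case True then show ?thesis using w by (auto simp: d_def W_def)
    next
      case False
      have "2 * s (Suc i) \<le> N * s (Suc i)" using N_ge s_Suc[of i] by (intro mult_right_mono) auto
      then show ?thesis using False s_Suc[of i] by (simp add: d_def)
    qed
    then show ?thesis by (auto simp: W_def wd_def)
  qed
  have wdS: "wd (Suc m) = wd m @ [d m]" for m by (simp add: wd_def)
  define X where "X m = {cc (wd m) .. cc (wd m) + cL (wd m)}" for m
  have sub: "X (Suc m) \<subseteq> X m" for m
  proof
    fix y assume "y \<in> X (Suc m)"
    moreover have "d m \<ge> 3" using w s_Suc[of m] by (auto simp: W_def d_def)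
    ultimately show "y \<in> X m" using cl_inside[OF W_good[OF wdW[of m]], of "d m" y] by (auto simp: X_def wdS)
  qed
  have "\<Inter>(range X) \<noteq> {}"
  proof (rule compact_nest)
    show "compact (X m)" for m by (simp add: X_def)
    show "X m \<noteq> {}" for m using cyl_bounds[OF W_good[OF wdW[of m]]] by (simp add: X_def)
    show "m \<le> k \<Longrightarrow> X k \<subseteq> X m" for m k
      using decseqD[OF decseq_SucI[of X, OF sub]] by blast
  qed
  then obtain x where x: "\<And>m. x \<in> X m" by blast
  have "x \<in> K" unfolding K_def using x wdW by (auto simp: X_def)
  then have xE: "x \<in> E" using E_eq_K by simp
  have wn: "wd n = w" using w by (intro nth_equalityI) (auto simp: wd_def d_def W_def)
  have "d n \<ge> 3" using s_Suc[of n] by (simp add: d_def)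
  then have "cc w < x \<and> x < cc w + cL w"
    using cl_inside[OF W_good[OF w], of "d n" x] x[of "Suc n"] by (auto simp: X_def wdS wn)
  then show ?thesis using pre_eq[OF w] xE by blast
qed

lemma cL_prod: "cL w = (\<Prod>i<length w. 1 / (real_of_int (w!i) * (real_of_int (w!i) - 1)))"
proof (induction w)
  case (Cons a w)
  show ?case unfolding length_Cons prod.lessThan_Suc_shift using Cons by simp
qed simp

definition Lam :: "nat \<Rightarrow> real" where
  "Lam k = (\<Prod>i<k. (real_of_int N * real_of_int (s (Suc i)))^2)"

definition Lup :: "nat \<Rightarrow> real" where
  "Lup k = (\<Prod>i<k. 1 / (real_of_int (s (Suc i)) * (real_of_int (s (Suc i)) - 1)))"

lemma cL_lower: "w \<in> W k \<Longrightarrow> 1 / Lam k \<le> cL w"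
proof -
  assume w: "w \<in> W k"
  then have lw: "length w = k" by (simp add: W_def)
  have "1 / Lam k = (\<Prod>i<k. 1 / (real_of_int N * real_of_int (s (Suc i)))^2)"
    by (simp add: Lam_def prod_dividef power_one_over)
  also have "\<dots> \<le> (\<Prod>i<k. 1 / (real_of_int (w!i) * (real_of_int (w!i) - 1)))"
  proof (rule prod_mono)
    fix i assume i: "i \<in> {..<k}"
    have r: "s (Suc i) \<le> w!i" "w!i \<le> N * s (Suc i) - 1" using w i by (auto simp: W_def)
    have s4: "real_of_int (s (Suc i)) \<ge> 4" using s_Suc[of i] by simp
    have a1: "real_of_int (w!i) \<ge> 4" using r(1) s_Suc[of i] by simp
    have a2: "real_of_int (w!i) \<le> real_of_int N * real_of_int (s (Suc i))" using r(2) by (simp flip: of_int_mult) 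
    have "real_of_int (w!i) * (real_of_int (w!i) - 1) \<le> (real_of_int N * real_of_int (s (Suc i)))^2"
    proof -
      have "real_of_int (w!i) * (real_of_int (w!i) - 1) \<le> real_of_int (w!i) * real_of_int (w!i)" using a1 by simp
      also have "\<dots> \<le> (real_of_int N * real_of_int (s (Suc i))) * (real_of_int N * real_of_int (s (Suc i)))"
        using a1 a2 by (intro mult_mono) auto
      finally show ?thesis by (simp add: power2_eq_square)
    qed
    moreover have "real_of_int (w!i) * (real_of_int (w!i) - 1) > 0" using a1 by simp
    ultimately show "0 \<le> 1 / (real_of_int N * real_of_int (s (Suc i)))^2 \<and>
      1 / (real_of_int N * real_of_int (s (Suc i)))^2 \<le> 1 / (real_of_int (w!i) * (real_of_int (w!i) - 1))"
      by (simp add: frac_le)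
  qed
  also have "\<dots> = cL w" using lw by (simp add: cL_prod)
  finally show ?thesis .
qed

lemma cL_upper: "w \<in> W k \<Longrightarrow> cL w \<le> Lup k"
proof -
  assume w: "w \<in> W k"
  then have lw: "length w = k" by (simp add: W_def)
  have "cL w = (\<Prod>i<k. 1 / (real_of_int (w!i) * (real_of_int (w!i) - 1)))" using lw by (simp add: cL_prod)
  also have "\<dots> \<le> Lup k" unfolding Lup_def
  proof (rule prod_mono)
    fix i assume i: "i \<in> {..<k}"
    have r: "s (Suc i) \<le> w!i" using w i by (auto simp: W_def)
    have s4: "real_of_int (s (Suc i)) \<ge> 4" using s_Suc[of i] by simp
    have a1: "real_of_int (s (Suc i)) \<le> real_of_int (w!i)" using r by simp
    have "real_of_int (s (Suc i)) * (real_of_int (s (Suc i)) - 1) \<le> real_of_int (w!i) * (real_of_int (w!i) - 1)"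
      using a1 s4 by (intro mult_mono) auto
    moreover have "real_of_int (s (Suc i)) * (real_of_int (s (Suc i)) - 1) > 0" using s4 by simp
    ultimately show "0 \<le> 1 / (real_of_int (w!i) * (real_of_int (w!i) - 1)) \<and>
      1 / (real_of_int (w!i) * (real_of_int (w!i) - 1)) \<le> 1 / (real_of_int (s (Suc i)) * (real_of_int (s (Suc i)) - 1))"
      by (simp add: frac_le)
  qed
  finally show ?thesis .
qed

definition Q :: "nat \<Rightarrow> real" where "Q n = real (card (W n))"

lemma Q_nonneg: "Q n \<ge> 0" by (simp add: Q_def)

lemma Q_Suc: "Q (Suc n) = Q n * (real_of_int (N - 1) * real_of_int (s (Suc n)))"
proof -
  have "(N - 1) * s (Suc n) \<ge> 0" using N_ge s_Suc[of n] by simp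
  then show ?thesis by (simp add: Q_def card_W)
qed

lemma Q_ge: "Q n \<ge> 4 ^ n"
proof (induction n)
  case 0 then show ?case by (simp add: Q_def)
next
  case (Suc n)
  have "real_of_int (N - 1) * real_of_int (s (Suc n)) \<ge> 1 * 4" using N_ge s_Suc[of n] by (intro mult_mono) auto
  then have "Q n * 4 \<le> Q (Suc n)" unfolding Q_Suc using Q_nonneg[of n] by (intro mult_left_mono) auto
  then show ?case using Suc by simp
qed

lemma Q_pos: "Q n > 0" using Q_ge[of n] by (smt (verit) zero_less_power)

lemma pre_img: "S \<subseteq> E \<Longrightarrow> pre n ` S \<subseteq> W n" using pre_W by blast
lemma fin_pre_img: "S \<subseteq> E \<Longrightarrow> finite (pre n ` S)" using finite_subset[OF pre_img finite_W] .

lemma card_step: assumes "S \<subseteq> E"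
  shows "card (pre (Suc n) ` S) \<le> card (pre n ` S) * card (R (Suc n))"
proof -
  have "pre (Suc n) ` S \<subseteq> (\<lambda>(u,a). u@[a]) ` (pre n ` S \<times> R (Suc n))"
  proof
    fix v assume "v \<in> pre (Suc n) ` S"
    then obtain x where x: "x \<in> S" "v = pre (Suc n) x" by auto
    have "luroth_digit (Suc n) x \<in> R (Suc n)" using x assms by (auto simp: E_def R_def)
    then show "v \<in> (\<lambda>(u,a). u@[a]) ` (pre n ` S \<times> R (Suc n))"
      using x by (auto simp: pre_Suc')
  qed
  then have "card (pre (Suc n) ` S) \<le> card ((\<lambda>(u,a). u@[a]) ` (pre n ` S \<times> R (Suc n)))"
    using fin_pre_img[OF assms] finite_R by (intro card_mono) auto
  also have "\<dots> \<le> card (pre n ` S \<times> R (Suc n))" by (rule card_image_le) (use fin_pre_img[OF assms] finite_R in auto)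
  finally show ?thesis by (simp add: card_cartesian_product)
qed

lemma mass_step: assumes "S \<subseteq> E"
  shows "real (card (pre (Suc n) ` S)) / Q (Suc n) \<le> real (card (pre n ` S)) / Q n"
proof -
  have cr: "real (card (R (Suc n))) = real_of_int (N - 1) * real_of_int (s (Suc n))"
    using N_ge s_Suc[of n] by (simp add: card_R)
  have pos: "real_of_int (N - 1) * real_of_int (s (Suc n)) > 0" using N_ge s_Suc[of n] by simp
  have "real (card (pre (Suc n) ` S)) \<le> real (card (pre n ` S)) * (real_of_int (N - 1) * real_of_int (s (Suc n)))"
    using card_step[OF assms, of n] cr by (metis of_nat_le_iff of_nat_mult)
  then have "real (card (pre (Suc n) ` S)) / Q (Suc n) \<le> real (card (pre n ` S)) * (real_of_int (N - 1) * real_of_int (s (Suc n))) / Q (Suc n)"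
    using Q_nonneg by (intro divide_right_mono) auto
  also have "\<dots> = real (card (pre n ` S)) / Q n" unfolding Q_Suc
    by (rule nonzero_mult_divide_mult_cancel_right) (use N_ge s_Suc[of n] in simp)
  finally show ?thesis .
qed

lemma mass_mono: assumes "S \<subseteq> E" "m \<le> n"
  shows "real (card (pre n ` S)) / Q n \<le> real (card (pre m ` S)) / Q m"
  using assms(2)
proof (induction n)
  case 0 then show ?case by simp
next
  case (Suc n)
  show ?case
  proof (cases "m = Suc n")
    case False
    then have "m \<le> n" using Suc by simp
    then show ?thesis using Suc mass_step[OF assms(1), of n] by linarith
  qed simp
qed

lemma cover_count:
  assumes "finite F" "E \<subseteq> (\<Union>j\<in>F. B j)"
  shows "Q n \<le> (\<Sum>j\<in>F. real (card (pre n ` (E \<inter> B j))))"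
proof -
  have "W n \<subseteq> (\<Union>j\<in>F. pre n ` (E \<inter> B j))"
  proof
    fix w assume "w \<in> W n"
    then obtain x where "x \<in> E" "pre n x = w" using ext by blast
    then show "w \<in> (\<Union>j\<in>F. pre n ` (E \<inter> B j))" using assms(2) by blast
  qed
  then have "card (W n) \<le> card (\<Union>j\<in>F. pre n ` (E \<inter> B j))"
    using assms(1) fin_pre_img by (intro card_mono) auto
  also have "\<dots> \<le> (\<Sum>j\<in>F. card (pre n ` (E \<inter> B j)))" by (rule card_UN_le[OF assms(1)])
  finally show ?thesis unfolding Q_def by (metis of_nat_le_iff of_nat_sum)
qed

lemma first_jump: "\<not> P 0 \<Longrightarrow> P n \<Longrightarrow> \<exists>k. \<not> P k \<and> P (Suc k)"
  by (induction n) auto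

lemma min_powr: fixes Y t c :: real assumes "Y > 0" "0 < t" "t < 1" "c \<le> 1" "c \<le> Y" shows "c \<le> Y powr t"
proof (cases "Y \<ge> 1")
  case True then show ?thesis using assms ge_one_powr_ge_zero[of Y t] by linarith
next
  case False
  then have "Y powr 1 \<le> Y powr t" using assms by (intro powr_mono') auto
  then show ?thesis using assms by simp
qed

lemma digit_cyl_lower:
  assumes "x \<in> E" shows "cc (pre n x) < x"
proof -
  have x01: "0 < x" "x \<le> 1" using assms by (auto simp: E_def)
  note b = cyl_backward[OF x01, of n]
  have "cL (pre n x) * (luroth_map ^^ n) x > 0" using b cyl_bounds by (meson mult_pos_pos)
  then show ?thesis using b by linarith
qed

lemma digit_cyl_upper:
  assumes "x \<in> E" shows "x \<le> cc (pre n x) + cL (pre n x)"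
proof -
  have x01: "0 < x" "x \<le> 1" using assms by (auto simp: E_def)
  note b = cyl_backward[OF x01, of n]
  have "cL (pre n x) * (luroth_map ^^ n) x \<le> cL (pre n x) * 1" using b cyl_bounds
    by (intro mult_left_mono) (auto simp: less_imp_le)
  then show ?thesis using b by linarith
qed

lemma ball_est:
  fixes t G \<rho> p :: real
  assumes t: "0 < t" "t < 1"
    and G: "\<And>k. (real_of_int (s (Suc k)) * Lam k) powr t / Q k \<le> G"
    and \<rho>: "\<rho> > 0"
  shows "\<exists>n0. \<forall>n\<ge>n0. real (card (pre n ` (E \<inter> ball p \<rho>))) / Q n
            \<le> (3 * real_of_int N ^ 2 / (real_of_int N - 1)) powr t * G * (2 * \<rho>) powr t"
proof -
  define S where "S = E \<inter> ball p \<rho>"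
  have SE: "S \<subseteq> E" by (simp add: S_def)
  define C' where "C' = (3 * real_of_int N ^ 2 / (real_of_int N - 1)) powr t"
  have Nr: "real_of_int N \<ge> 2" using N_ge by simp
  have C'pos: "C' > 0" using Nr by (simp add: C'_def)
  have "G \<ge> (real_of_int (s (Suc 0)) * Lam 0) powr t / Q 0" by (rule G)
  moreover have "(real_of_int (s (Suc 0)) * Lam 0) powr t / Q 0 > 0"
    using s_Suc[of 0] Q_pos[of 0] by (simp add: Lam_def)
  ultimately have Gpos: "G > 0" by linarith
  have bound_pos: "C' * G * (2 * \<rho>) powr t > 0" using C'pos Gpos \<rho> by simp
  show ?thesis
  proof (cases "\<forall>n. card (pre n ` S) \<le> 1")
    case True
    obtain n0 where n0: "1 / (C' * G * (2 * \<rho>) powr t) < 4 ^ n0" using real_arch_pow[of 4] by fastforce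
    have "real (card (pre n ` S)) / Q n \<le> C' * G * (2 * \<rho>) powr t" if "n \<ge> n0" for n
    proof -
      have "real (card (pre n ` S)) / Q n \<le> 1 / Q n" using True[rule_format, of n] Q_pos[of n]
        by (intro divide_right_mono) auto
      also have "\<dots> \<le> 1 / 4 ^ n" using Q_ge[of n] Q_pos[of n] by (intro divide_left_mono) auto
      also have "\<dots> \<le> 1 / 4 ^ n0"
      proof -
        have "(4::real) ^ n0 \<le> 4 ^ n" using that by (rule power_increasing) simp
        then show ?thesis by (intro divide_left_mono) auto
      qed
      also have "\<dots> \<le> C' * G * (2 * \<rho>) powr t"
      proof -
        define X where "X = C' * G * (2 * \<rho>) powr t"
        have "1 < 4 ^ n0 * X" using n0 bound_pos unfolding X_def[symmetric] by (simp add: divide_less_eq)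
        then have "1 / 4 ^ n0 < X" by (simp add: divide_less_eq mult.commute)
        then show ?thesis by (simp add: X_def)
      qed
      finally show ?thesis .
    qed
    then show ?thesis unfolding S_def C'_def by blast
  next
    case False
    then obtain n where "\<not> card (pre n ` S) \<le> 1" by blast
    moreover have "card (pre 0 ` S) \<le> 1"
    proof -
      have "pre 0 ` S \<subseteq> {[]}" by (auto simp: pre_def)
      then show ?thesis using card_mono[of "{[]}" "pre 0 ` S"] by simp
    qed
    ultimately obtain k where k: "card (pre k ` S) \<le> 1" "\<not> card (pre (Suc k) ` S) \<le> 1"
      using first_jump[of "\<lambda>n. \<not> card (pre n ` S) \<le> 1" n] by auto
    have "S \<noteq> {}"
    proof
      assume "S = {}" then show False using k(2) by simp
    qed
    then obtain x0 where x0: "x0 \<in> S" by blast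
    define w where "w = pre k x0"
    have one: "\<forall>a1\<in>pre k ` S. \<forall>a2\<in>pre k ` S. a1 = a2"
    proof -
      have "card (pre k ` S) \<le> Suc 0" using k(1) by simp
      then show ?thesis using card_le_Suc0_iff_eq[OF fin_pre_img[OF SE, of k]] by blast
    qed
    have allw: "pre k x = w" if "x \<in> S" for x
      using one x0 that unfolding w_def by blast
    have wW: "w \<in> W k" using pre_W x0 SE by (auto simp: w_def)
    define D where "D = (\<lambda>x. luroth_digit (Suc k) x) ` S"
    have img: "pre (Suc k) ` S = (\<lambda>a. w @ [a]) ` D"
      unfolding D_def image_image using allw by (auto simp: pre_Suc' intro!: image_cong)
    have cardD: "card (pre (Suc k) ` S) = card D" unfolding img by (rule card_image) (auto simp: inj_on_def)
    have DR: "D \<subseteq> R (Suc k)" using SE by (auto simp: D_def E_def R_def)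
    have finD: "finite D" using finite_subset[OF DR finite_R] .
    have D2: "card D \<ge> 2" using k(2) cardD by simp
    then have Dne: "D \<noteq> {}" by auto
    define A where "A = Min D"
    define B where "B = Max D"
    have AD: "A \<in> D" and BD: "B \<in> D" using finD Dne by (simp_all add: A_def B_def)
    have AB: "A < B"
    proof (rule ccontr)
      assume "\<not> A < B"
      have "D \<subseteq> {A}"
      proof
        fix x assume "x \<in> D"
        then have "A \<le> x" "x \<le> B" using finD by (simp_all add: A_def B_def)
        then show "x \<in> {A}" using \<open>\<not> A < B\<close> by simp
      qed
      then have "card D \<le> 1" using card_mono[of "{A}" D] by simp
      then show False using D2 by simp
    qed
    have cardD_AB: "real (card D) \<le> 2 * (real_of_int B - real_of_int A)"
    proof -
      have "D \<subseteq> {A..B}" using finD Dne by (auto simp: A_def B_def)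
      then have "card D \<le> card {A..B}" by (intro card_mono) auto
      then have "card D \<le> nat (B - A + 1)" by simp
      then have "real (card D) \<le> real_of_int (B - A + 1)" using AB by linarith
      then show ?thesis using AB by simp
    qed
    define M where "M = real_of_int (N - 1) * real_of_int (s (Suc k))"
    have Mpos: "M > 0" using N_ge s_Suc[of k] by (simp add: M_def)
    have cardD_M: "real (card D) \<le> M"
    proof -
      have "card D \<le> card (R (Suc k))" by (rule card_mono[OF finite_R DR])
      then have "real (card D) \<le> real (nat ((N - 1) * s (Suc k)))" using card_R[of k] by simp
      also have "\<dots> = real_of_int ((N - 1) * s (Suc k))" using N_ge s_Suc[of k] by simp
      finally show ?thesis by (simp add: M_def)
    qed
    obtain x1 where x1: "x1 \<in> S" "luroth_digit (Suc k) x1 = A" using AD by (auto simp: D_def)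
    obtain x2 where x2: "x2 \<in> S" "luroth_digit (Suc k) x2 = B" using BD by (auto simp: D_def)
    define sk where "sk = real_of_int (s (Suc k))"
    have sk4: "sk \<ge> 4" using s_Suc[of k] by (simp add: sk_def)
    have Ar: "real_of_int A \<ge> 4" using R_sub AD DR by force
    have "B \<le> N * s (Suc k) - 1" using BD DR by (auto simp: R_def)
    then have Br: "real_of_int B \<le> real_of_int N * sk - 1" unfolding sk_def
      by (metis of_int_1 of_int_diff of_int_le_iff of_int_mult)
    have ABr: "real_of_int A + 1 \<le> real_of_int B" using AB by simp
    note Lw = cL_lower[OF wW]
    note wb = cyl_bounds[OF W_good[OF wW]]
    have Lampos: "Lam k > 0" unfolding Lam_def
    proof (rule prod_pos)
      fix i show "0 < (real_of_int N * real_of_int (s (Suc i)))\<^sup>2" using N_ge s_Suc[of i] by simp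
    qed
    have p1: "pre (Suc k) x1 = w @ [A]" using allw x1 by (simp add: pre_Suc')
    have X1: "x1 > cc w + cL w * (1 / real_of_int A)"
      using digit_cyl_lower[of x1 "Suc k"] x1 SE by (auto simp: p1 cc_append)
    define e where "e = luroth_digit (Suc (Suc k)) x2"
    have e4: "real_of_int e \<ge> 4"
    proof -
      have "s (Suc (Suc k)) \<le> e" using x2 SE by (auto simp: E_def e_def)
      then show ?thesis using s_Suc[of "Suc k"] by simp
    qed
    have p2: "pre (Suc (Suc k)) x2 = w @ [B, e]"
      using allw x2 by (simp add: pre_Suc' e_def)
    have X2: "x2 \<le> cc w + cL w * (1 / real_of_int B + 1 / (3 * real_of_int B * (real_of_int B - 1)))"
    proof -
      have "x2 \<le> cc (w @ [B, e]) + cL (w @ [B, e])"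
        using digit_cyl_upper[of x2 "Suc (Suc k)"] x2 SE by (auto simp: p2)
      also have "\<dots> = cc w + cL w * (cc [B, e] + cL [B, e])" by (simp add: cc_append cL_append distrib_left)
      finally have x2le: "x2 \<le> cc w + cL w * (cc [B, e] + cL [B, e])" .
      define b where "b = real_of_int B"
      define f where "f = real_of_int e"
      have b4: "b \<ge> 5" using Ar ABr by (simp add: b_def)
      have f4: "f \<ge> 4" using e4 by (simp add: f_def)
      have ff: "1 / f + 1 / (f * (f - 1)) = 1 / (f - 1)" using f4 by (simp add: field_simps)
      have "cc [B, e] + cL [B, e] = 1 / b + (1 / f + 1 / (f * (f - 1))) / (b * (b - 1))"
        by (simp add: b_def f_def add_divide_distrib)
      also have "\<dots> = 1 / b + (1 / (f - 1)) / (b * (b - 1))" using ff by simp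
      also have "\<dots> \<le> 1 / b + (1 / 3) / (b * (b - 1))"
        using f4 b4 by (intro add_left_mono divide_right_mono) (auto simp: frac_le)
      finally have "cc [B, e] + cL [B, e] \<le> 1 / real_of_int B + 1 / (3 * real_of_int B * (real_of_int B - 1))"
        by (simp add: b_def)
      then show ?thesis using x2le wb by (smt (verit) mult_left_mono)
    qed
    have gap: "1 / real_of_int A - 1 / real_of_int B - 1 / (3 * real_of_int B * (real_of_int B - 1))
        \<ge> (2/3) * ((real_of_int B - real_of_int A) / (real_of_int A * real_of_int B))"
    proof -
      have "1 / (real_of_int B * (real_of_int B - 1)) = 1 / (real_of_int B - 1) - 1 / real_of_int B"
        using Ar ABr by (simp add: field_simps)
      also have "\<dots> \<le> 1 / real_of_int A - 1 / real_of_int B" using Ar ABr by (simp add: frac_le)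
      finally have h: "1 / (real_of_int B * (real_of_int B - 1)) \<le> 1 / real_of_int A - 1 / real_of_int B" .
      have "1 / real_of_int A - 1 / real_of_int B = (real_of_int B - real_of_int A) / (real_of_int A * real_of_int B)"
        using Ar ABr by (simp add: field_simps)
      moreover have "1 / (3 * real_of_int B * (real_of_int B - 1)) = (1/3) * (1 / (real_of_int B * (real_of_int B - 1)))"
        by simp
      moreover have "\<And>a1 a2 a3 a4 :: real. a1 = a3 \<Longrightarrow> a4 = 1/3*a2 \<Longrightarrow> a2 \<le> a1 \<Longrightarrow> 2/3*a3 \<le> a1 - a4" by linarith
      ultimately show ?thesis using h by blast
    qed
    have dist12: "x1 - x2 < 2 * \<rho>"
    proof -
      have "dist x1 p < \<rho>" "dist x2 p < \<rho>" using x1 x2 by (auto simp: S_def dist_commute)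
      then show ?thesis by (simp add: dist_real_def abs_less_iff)
    qed
    have "cL w * ((2/3) * ((real_of_int B - real_of_int A) / (real_of_int A * real_of_int B))) < 2 * \<rho>"
    proof -
      have "cL w * ((2/3) * ((real_of_int B - real_of_int A) / (real_of_int A * real_of_int B)))
          \<le> cL w * (1 / real_of_int A - 1 / real_of_int B - 1 / (3 * real_of_int B * (real_of_int B - 1)))"
        using gap wb by (intro mult_left_mono) auto
      also have "\<dots> \<le> x1 - x2" using X1 X2 by (simp add: algebra_simps)
      finally show ?thesis using dist12 by linarith
    qed
    moreover have ABN: "real_of_int A * real_of_int B \<le> (real_of_int N * sk)^2"
    proof -
      have "real_of_int A * real_of_int B \<le> (real_of_int N * sk) * (real_of_int N * sk)"
        using Ar ABr Br by (intro mult_mono) auto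
      then show ?thesis by (simp add: power2_eq_square)
    qed
    ultimately have "cL w * ((2/3) * ((real_of_int B - real_of_int A) / (real_of_int N * sk)^2)) < 2 * \<rho>"
    proof -
      assume a: "cL w * ((2/3) * ((real_of_int B - real_of_int A) / (real_of_int A * real_of_int B))) < 2 * \<rho>"
      have "(real_of_int B - real_of_int A) / (real_of_int N * sk)^2 \<le> (real_of_int B - real_of_int A) / (real_of_int A * real_of_int B)"
      proof (rule divide_left_mono)
        show "0 < (real_of_int N * sk)\<^sup>2 * (real_of_int A * real_of_int B)"
          using Ar ABr Nr sk4 by (intro mult_pos_pos) auto
      qed (use ABN ABr in auto)
      then have "cL w * ((2/3) * ((real_of_int B - real_of_int A) / (real_of_int N * sk)^2))
          \<le> cL w * ((2/3) * ((real_of_int B - real_of_int A) / (real_of_int A * real_of_int B)))"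
        using wb by (intro mult_left_mono) auto
      then show ?thesis using a by linarith
    qed
    then have "real_of_int B - real_of_int A < 3 * \<rho> * (real_of_int N * sk)^2 / cL w"
      using wb Nr sk4 by (simp add: field_simps)
    also have "\<dots> \<le> 3 * \<rho> * (real_of_int N * sk)^2 * Lam k"
    proof -
      have "1 / cL w \<le> Lam k" using Lw wb Lampos by (simp add: field_simps)
      then show ?thesis using \<rho> by (simp add: divide_inverse mult_left_mono)
    qed
    finally have "real_of_int B - real_of_int A < 3 * \<rho> * (real_of_int N * sk)^2 * Lam k" .
    moreover have "3 * (2 * \<rho>) * (real_of_int N * sk)^2 * Lam k = 2 * (3 * \<rho> * (real_of_int N * sk)^2 * Lam k)" by simp
    moreover have "\<And>a1 a2 a3 a4 :: real. a1 < a2 \<Longrightarrow> a3 = 2 * a2 \<Longrightarrow> a4 \<le> 2 * a1 \<Longrightarrow> a4 \<le> a3" by linarith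
    ultimately have cD: "real (card D) \<le> 3 * (2 * \<rho>) * (real_of_int N * sk)^2 * Lam k" using cardD_AB by blast
    define Y where "Y = (3 * real_of_int N ^ 2 / (real_of_int N - 1)) * (2 * \<rho>) * (sk * Lam k)"
    have Ypos: "Y > 0" using Nr \<rho> sk4 Lampos by (simp add: Y_def)
    have MY: "3 * (2 * \<rho>) * (real_of_int N * sk)^2 * Lam k = M * Y"
      using Nr by (simp add: M_def Y_def sk_def power2_eq_square field_simps)
    have "real (card D) / M \<le> Y powr t"
      using min_powr[OF Ypos t] cardD_M cD MY Mpos by (simp add: field_simps)
    have ratio: "real (card (pre (Suc k) ` S)) / Q (Suc k) = (real (card D) / M) / Q k"
      using cardD by (simp add: Q_Suc M_def)
    also have "\<dots> \<le> Y powr t / Q k" using \<open>real (card D) / M \<le> Y powr t\<close> Q_pos[of k]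
      by (intro divide_right_mono) auto
    also have "\<dots> = C' * (2 * \<rho>) powr t * ((sk * Lam k) powr t / Q k)"
    proof -
      have "Y powr t = C' * (2 * \<rho>) powr t * (sk * Lam k) powr t" unfolding Y_def C'_def
        by (metis powr_mult)
      then show ?thesis by simp
    qed
    also have "\<dots> \<le> C' * (2 * \<rho>) powr t * G" using G[of k] C'pos \<rho>
      by (intro mult_left_mono) (auto simp: sk_def)
    finally have fin: "real (card (pre (Suc k) ` S)) / Q (Suc k) \<le> C' * G * (2 * \<rho>) powr t" by (simp add: ac_simps)
    have "\<forall>n\<ge>Suc k. real (card (pre n ` S)) / Q n \<le> C' * G * (2 * \<rho>) powr t"
      using mass_mono[OF SE] fin order_trans by blast
    then show ?thesis unfolding S_def C'_def by blast
  qed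
qed

lemma max_powr_le: fixes d e t :: real assumes "d \<ge> 0" "e \<ge> 0" "t > 0"
  shows "(2 * (d + e)) powr t \<le> 4 powr t * (d powr t + e powr t)"
proof -
  have "2 * (d + e) \<le> 4 * max d e" by (simp add: max_def)
  then have "(2 * (d + e)) powr t \<le> (4 * max d e) powr t" using assms by (intro powr_mono2) auto
  also have "\<dots> = 4 powr t * max d e powr t" by (simp add: powr_mult)
  also have "max d e powr t \<le> d powr t + e powr t" by (simp add: max_def)
  then have "4 powr t * max d e powr t \<le> 4 powr t * (d powr t + e powr t)" by (intro mult_left_mono) auto
  finally show ?thesis .
qed

lemma H_lower:
  fixes t G :: real
  assumes t: "0 < t" "t < 1"
    and G: "\<And>k. (real_of_int (s (Suc k)) * Lam k) powr t / Q k \<le> G"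
  shows "hausdorff_measure t E \<noteq> 0"
proof -
  define C where "C = (3 * real_of_int N ^ 2 / (real_of_int N - 1)) powr t * G"
  have Nr: "real_of_int N \<ge> 2" using N_ge by simp
  have "G \<ge> (real_of_int (s (Suc 0)) * Lam 0) powr t / Q 0" by (rule G)
  moreover have "(real_of_int (s (Suc 0)) * Lam 0) powr t / Q 0 > 0"
    using s_Suc[of 0] Q_pos[of 0] by (simp add: Lam_def)
  ultimately have Gpos: "G > 0" by linarith
  have Cpos: "C > 0" using Nr Gpos by (simp add: C_def)
  define \<epsilon> where "\<epsilon> = 1 / (2 * C * 4 powr t)"
  have \<epsilon>pos: "\<epsilon> > 0" using Cpos by (simp add: \<epsilon>_def)
  have main: "ennreal \<epsilon> \<le> (\<Sum>i. ennreal (diameter (U i) powr t))"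
    if cov: "E \<subseteq> (\<Union>i. U i)" and bd: "\<And>i. bounded (U i)" for U :: "nat \<Rightarrow> real set"
  proof -
    define d where "d i = diameter (U i)" for i
    have d0: "d i \<ge> 0" for i using diameter_ge_0[OF bd[of i]] by (simp add: d_def)
    define \<eta> where "\<eta> i = (\<epsilon> * (1/2)^Suc i) powr (1/t)" for i
    have \<eta>pos: "\<eta> i > 0" for i using \<epsilon>pos by (simp add: \<eta>_def)
    have \<eta>t: "\<eta> i powr t = \<epsilon> * (1/2)^Suc i" for i
      using \<epsilon>pos t by (simp add: \<eta>_def powr_powr)
    define p where "p i = (SOME x. x \<in> U i)" for i
    define \<rho> where "\<rho> i = d i + \<eta> i" for i
    have \<rho>pos: "\<rho> i > 0" for i using d0[of i] \<eta>pos[of i] by (simp add: \<rho>_def)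
    have Uball: "U i \<subseteq> ball (p i) (\<rho> i)" for i
    proof
      fix x assume x: "x \<in> U i"
      then have pU: "p i \<in> U i" unfolding p_def by (rule someI)
      have "dist (p i) x \<le> d i" unfolding d_def by (rule diameter_bounded_bound[OF bd pU x])
      then show "x \<in> ball (p i) (\<rho> i)" using \<eta>pos[of i] by (simp add: \<rho>_def)
    qed
    have "E \<subseteq> (\<Union>i\<in>UNIV. ball (p i) (\<rho> i))" using cov Uball by blast
    then obtain F where F: "finite F" "E \<subseteq> (\<Union>i\<in>F. ball (p i) (\<rho> i))"
      using compactE_image[OF compact_E, of UNIV "\<lambda>i. ball (p i) (\<rho> i)"] by auto
    have "\<exists>n0. \<forall>n\<ge>n0. real (card (pre n ` (E \<inter> ball (p i) (\<rho> i)))) / Q n \<le> C * (2 * \<rho> i) powr t" for i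
      using ball_est[OF t G \<rho>pos[of i], of "p i"] by (simp add: C_def)
    then obtain n0 where n0: "\<And>i n. n \<ge> n0 i \<Longrightarrow> real (card (pre n ` (E \<inter> ball (p i) (\<rho> i)))) / Q n \<le> C * (2 * \<rho> i) powr t"
      by metis
    define n where "n = (\<Sum>i\<in>F. n0 i)"
    have nge: "n \<ge> n0 i" if "i \<in> F" for i unfolding n_def using F(1) that by (simp add: member_le_sum)
    have "Q n \<le> (\<Sum>j\<in>F. real (card (pre n ` (E \<inter> ball (p j) (\<rho> j)))))"
      by (rule cover_count[OF F])
    then have "1 \<le> (\<Sum>j\<in>F. real (card (pre n ` (E \<inter> ball (p j) (\<rho> j))))) / Q n"
      using Q_pos[of n] by simp
    also have "\<dots> = (\<Sum>j\<in>F. real (card (pre n ` (E \<inter> ball (p j) (\<rho> j)))) / Q n)"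
      by (simp add: sum_divide_distrib)
    also have "\<dots> \<le> (\<Sum>j\<in>F. C * (2 * \<rho> j) powr t)"
      by (intro sum_mono n0 nge)
    also have "\<dots> \<le> (\<Sum>j\<in>F. C * (4 powr t * (d j powr t + \<eta> j powr t)))"
    proof (intro sum_mono mult_left_mono)
      fix j show "(2 * \<rho> j) powr t \<le> 4 powr t * (d j powr t + \<eta> j powr t)"
        unfolding \<rho>_def by (rule max_powr_le[OF d0 less_imp_le[OF \<eta>pos] t(1)])
    qed (use Cpos in auto)
    also have "\<dots> = C * 4 powr t * ((\<Sum>j\<in>F. d j powr t) + (\<Sum>j\<in>F. \<eta> j powr t))"
      by (simp add: sum_distrib_left sum.distrib algebra_simps)
    also have "(\<Sum>j\<in>F. \<eta> j powr t) \<le> \<epsilon>"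
    proof -
      have "(\<Sum>j\<in>F. \<eta> j powr t) = (\<Sum>j\<in>F. \<epsilon> * (1/2)^Suc j)" by (simp add: \<eta>t)
      also have "\<dots> \<le> (\<Sum>j. \<epsilon> * (1/2)^Suc j)"
        using \<epsilon>pos F(1) by (intro sum_le_suminf summable_mult sums_summable[OF power_half_series]) auto
      also have "\<dots> = \<epsilon>" using sums_unique[OF sums_mult[OF power_half_series, of \<epsilon>]] by simp
      finally show ?thesis .
    qed
    then have "C * 4 powr t * ((\<Sum>j\<in>F. d j powr t) + (\<Sum>j\<in>F. \<eta> j powr t)) \<le> C * 4 powr t * ((\<Sum>j\<in>F. d j powr t) + \<epsilon>)"
      using Cpos by (intro mult_left_mono) auto
    finally have "1 \<le> C * 4 powr t * ((\<Sum>j\<in>F. d j powr t) + \<epsilon>)" .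
    then have "1 / (C * 4 powr t) \<le> (\<Sum>j\<in>F. d j powr t) + \<epsilon>" using Cpos by (simp add: field_simps)
    moreover have "1 / (C * 4 powr t) = 2 * \<epsilon>" using Cpos by (simp add: \<epsilon>_def)
    ultimately have sF: "\<epsilon> \<le> (\<Sum>j\<in>F. d j powr t)" by linarith
    have "ennreal \<epsilon> \<le> ennreal (\<Sum>j\<in>F. d j powr t)" using sF by (rule ennreal_leI)
    also have "\<dots> = (\<Sum>j\<in>F. ennreal (d j powr t))" by (rule sum_ennreal[symmetric]) simp
    also have "\<dots> \<le> (\<Sum>j. ennreal (d j powr t))" by (rule sum_le_suminf) (use F(1) in auto)
    finally show ?thesis by (simp add: d_def)
  qed
  have "ennreal \<epsilon> \<le> hausdorff_pre t 1 E" unfolding hausdorff_pre_def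
    by (rule INF_greatest) (use main in auto)
  also have "\<dots> \<le> hausdorff_measure t E" unfolding hausdorff_measure_def
    by (rule SUP_upper) simp
  finally show ?thesis using \<epsilon>pos by auto
qed

definition Pp :: "nat \<Rightarrow> real" where "Pp n = (\<Prod>i<n. real_of_int (s (Suc i)))"

lemma s_Suc_r: "real_of_int (s (Suc i)) \<ge> 4" using s_Suc[of i] by simp

lemma Pp_pos: "Pp n > 0" unfolding Pp_def
proof (rule prod_pos)
  fix i show "0 < real_of_int (s (Suc i))" using s_Suc_r[of i] by simp
qed

lemma Pp_ge1: "Pp n \<ge> 1" unfolding Pp_def
proof (rule prod_ge_1)
  fix i show "1 \<le> real_of_int (s (Suc i))" using s_Suc_r[of i] by simp
qed

lemma ln_Pp: "ln (Pp n) = (\<Sum>i<n. ln (real_of_int (s (Suc i))))"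
  unfolding Pp_def
proof (rule ln_prod)
  fix i show "real_of_int (s (Suc i)) \<noteq> 0" using s_Suc_r[of i] by simp
qed simp

lemma ln_Pp_nonneg: "ln (Pp n) \<ge> 0" using Pp_ge1[of n] by simp

lemma Q_eq: "Q n = real_of_int (N - 1) ^ n * Pp n"
proof (induction n)
  case 0 then show ?case by (simp add: Q_def Pp_def)
next
  case (Suc n) then show ?case by (simp add: Q_Suc Pp_def)
qed

lemma Lam_eq: "Lam k = real_of_int N ^ (2 * k) * Pp k ^ 2"
  by (simp add: Lam_def Pp_def power_mult_distrib prod.distrib prod_power_distrib power_mult power2_eq_square)

lemma Lup_le: "Lup n \<le> 2 ^ n / Pp n ^ 2"
proof -
  have "Lup n \<le> (\<Prod>i<n. 2 / (real_of_int (s (Suc i)))^2)" unfolding Lup_def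
  proof (rule prod_mono)
    fix i
    have s4: "real_of_int (s (Suc i)) \<ge> 4" using s_Suc[of i] by simp
    have "(real_of_int (s (Suc i)))^2 / 2 \<le> real_of_int (s (Suc i)) * (real_of_int (s (Suc i)) - 1)"
      using s4 by (simp add: power2_eq_square field_simps)
    moreover have "(real_of_int (s (Suc i)))^2 / 2 > 0" using s4 by simp
    moreover have "real_of_int (s (Suc i)) * (real_of_int (s (Suc i)) - 1) > 0" using s4 by simp
    ultimately have "1 / (real_of_int (s (Suc i)) * (real_of_int (s (Suc i)) - 1)) \<le> 1 / ((real_of_int (s (Suc i)))^2 / 2)"
      by (intro divide_left_mono) (auto intro: mult_pos_pos)
    then show "0 \<le> 1 / (real_of_int (s (Suc i)) * (real_of_int (s (Suc i)) - 1)) \<and>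
        1 / (real_of_int (s (Suc i)) * (real_of_int (s (Suc i)) - 1)) \<le> 2 / (real_of_int (s (Suc i)))^2"
      using s4 by simp
  qed
  also have "\<dots> = 2 ^ n / Pp n ^ 2" by (simp add: Pp_def prod_dividef prod_power_distrib)
  finally show ?thesis .
qed

end

lemma hausdorff_pre_antimono:
  "\<delta>' \<le> \<delta> \<Longrightarrow> hausdorff_pre t \<delta> E \<le> hausdorff_pre t \<delta>' E"
  unfolding hausdorff_pre_def by (rule INF_superset_mono) (auto intro: order_trans)

lemma hausdorff_pre_mono_exp:
  fixes E :: "'a::metric_space set"
  assumes "0 \<le> a" "a \<le> b" "\<delta> \<le> 1"
  shows "hausdorff_pre b \<delta> E \<le> hausdorff_pre a \<delta> E"
  unfolding hausdorff_pre_def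
proof (rule INF_superset_mono[OF order_refl])
  fix U :: "nat \<Rightarrow> 'a set"
  assume U: "U \<in> {U. E \<subseteq> (\<Union>i. U i) \<and> (\<forall>i. bounded (U i) \<and> diameter (U i) \<le> \<delta>)}"
  have "ennreal (diameter (U i) powr b) \<le> ennreal (diameter (U i) powr a)" for i
  proof (rule ennreal_leI)
    have "diameter (U i) \<le> \<delta>" using U by auto
    then have d1: "diameter (U i) \<le> 1" using assms by linarith
    have d0: "diameter (U i) \<ge> 0" using U diameter_ge_0 by blast
    show "diameter (U i) powr b \<le> diameter (U i) powr a"
      using d0 d1 assms by (intro powr_mono') auto
  qed
  then show "(\<Sum>i. ennreal (diameter (U i) powr b)) \<le> (\<Sum>i. ennreal (diameter (U i) powr a))"
    by (intro suminf_le) auto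
qed

lemma hausdorff_measure_mono_exp:
  fixes E :: "'a::metric_space set"
  assumes "0 \<le> a" "a \<le> b"
  shows "hausdorff_measure b E \<le> hausdorff_measure a E"
  unfolding hausdorff_measure_def
proof (rule SUP_least)
  fix \<delta> :: real assume "\<delta> \<in> {0<..}"
  then have "min \<delta> 1 \<in> {0<..}" by simp
  have "hausdorff_pre b \<delta> E \<le> hausdorff_pre b (min \<delta> 1) E" by (rule hausdorff_pre_antimono) simp
  also have "\<dots> \<le> hausdorff_pre a (min \<delta> 1) E" by (rule hausdorff_pre_mono_exp) (use assms in auto)
  also have "\<dots> \<le> (SUP \<delta>\<in>{0<..}. hausdorff_pre a \<delta> E)" using \<open>min \<delta> 1 \<in> {0<..}\<close> by (rule SUP_upper)
  finally show "hausdorff_pre b \<delta> E \<le> (SUP \<delta>\<in>{0<..}. hausdorff_pre a \<delta> E)" .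
qed

locale lur2 = lur +
  assumes s_lim: "filterlim s at_top sequentially"
begin

lemma growth: "\<exists>n0. \<forall>n\<ge>n0. ln (Pp n) \<ge> c * (real n + 1)"
proof (cases "c \<le> 0")
  case True
  then show ?thesis using ln_Pp_nonneg by (metis mult_nonpos_nonneg of_nat_0_le_iff add_nonneg_nonneg zero_le_one order.trans)
next
  case False
  then have c: "c > 0" by simp
  obtain i0 where i0: "\<And>i. i \<ge> i0 \<Longrightarrow> s i \<ge> \<lceil>exp (2 * c)\<rceil>"
    using s_lim unfolding filterlim_at_top eventually_sequentially by blast
  have lns: "ln (real_of_int (s (Suc i))) \<ge> 2 * c" if "i \<ge> i0" for i
  proof -
    have "real_of_int (s (Suc i)) \<ge> exp (2 * c)" using i0[of "Suc i"] that
      by (meson le_of_int_ceiling le_SucI of_int_le_iff order.trans)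
    then have "ln (exp (2 * c)) \<le> ln (real_of_int (s (Suc i)))" using s_Suc[of i] by (subst ln_le_cancel_iff) auto
    then show ?thesis by simp
  qed
  have lnn: "ln (real_of_int (s (Suc i))) \<ge> 0" for i using s_Suc[of i] by simp
  have "ln (Pp n) \<ge> c * (real n + 1)" if n: "n \<ge> 2 * i0 + 1" for n
  proof -
    have "(\<Sum>i\<in>{i0..<n}. 2 * c) \<le> (\<Sum>i\<in>{i0..<n}. ln (real_of_int (s (Suc i))))"
      by (rule sum_mono) (use lns in auto)
    also have "\<dots> \<le> (\<Sum>i<n. ln (real_of_int (s (Suc i))))"
      by (rule sum_mono2) (use lnn in auto)
    finally have "real (n - i0) * (2 * c) \<le> ln (Pp n)" by (simp add: ln_Pp)
    moreover have "c * (real n + 1) \<le> real (n - i0) * (2 * c)"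
    proof -
      have "real n + 1 \<le> 2 * real (n - i0)" using n by linarith
      then have "c * (real n + 1) \<le> c * (2 * real (n - i0))" using c by (intro mult_left_mono) auto
      then show ?thesis by (simp add: algebra_simps)
    qed
    ultimately show ?thesis by linarith
  qed
  then show ?thesis by blast
qed


lemma small_bound:
  fixes t t' e :: real and n :: nat
  assumes tt: "0 \<le> t'" "t' < t" "t \<le> 1" and e: "e > 0"
    and fr: "ln (Pp n) < t' * (2 * ln (Pp n) + ln (real_of_int (s (Suc n))))"
    and gr: "ln (Pp n) \<ge> (ln (real_of_int N) + ln 2 + \<bar>ln e\<bar>) / (2 * (t - t')) * (real n + 1)"
  shows "real_of_int N ^ n * Pp n * (2 ^ Suc n / (Pp n ^ 2 * real_of_int (s (Suc n)))) powr t \<le> e"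
proof -
  define lP where "lP = ln (Pp n)"
  define \<sigma> where "\<sigma> = ln (real_of_int (s (Suc n)))"
  define L where "L = ln (real_of_int N)"
  have Nr: "real_of_int N \<ge> 2" using N_ge by simp
  have L0: "L \<ge> 0" using Nr by (simp add: L_def)
  have sr: "real_of_int (s (Suc n)) \<ge> 4" using s_Suc[of n] by simp
  have \<sigma>0: "\<sigma> \<ge> 0" using sr by (simp add: \<sigma>_def)
  have Pp: "Pp n > 0" by (rule Pp_pos)
  define Z where "Z = real_of_int N ^ n * Pp n * (2 ^ Suc n / (Pp n ^ 2 * real_of_int (s (Suc n)))) powr t"
  have Zpos: "Z > 0" using Nr Pp sr by (simp add: Z_def)
  have lnZ: "ln Z = real n * L + lP + t * (real (Suc n) * ln 2 - (2 * lP + \<sigma>))"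
  proof -
    have "ln Z = ln (real_of_int N ^ n) + ln (Pp n) + ln ((2 ^ Suc n / (Pp n ^ 2 * real_of_int (s (Suc n)))) powr t)"
      unfolding Z_def using Nr Pp sr by (simp add: ln_mult)
    also have "ln ((2 ^ Suc n / (Pp n ^ 2 * real_of_int (s (Suc n)))) powr t)
        = t * (real (Suc n) * ln 2 - (2 * lP + \<sigma>))"
    proof -
      have h1: "ln ((2::real) ^ Suc n) = real (Suc n) * ln 2" by (rule ln_realpow)
      have h2: "ln (Pp n ^ 2 * real_of_int (s (Suc n))) = 2 * lP + \<sigma>"
        using Pp sr by (simp add: ln_mult ln_realpow lP_def \<sigma>_def)
      have "ln ((2::real) ^ Suc n / (Pp n ^ 2 * real_of_int (s (Suc n)))) = ln ((2::real) ^ Suc n) - ln (Pp n ^ 2 * real_of_int (s (Suc n)))"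
        by (rule ln_divide_pos) (use Pp sr in auto)
      then show ?thesis unfolding ln_powr h1 h2 by simp
    qed
    finally show ?thesis using Pp Nr by (simp add: ln_realpow lP_def L_def)
  qed
  have F1: "lP < t' * (2 * lP + \<sigma>)" using fr by (simp add: lP_def \<sigma>_def)
  have F2: "(t - t') * \<sigma> \<ge> 0" using tt \<sigma>0 by simp
  have F3: "t * (real (Suc n) * ln 2) \<le> real (Suc n) * ln 2" using tt by (simp add: mult_left_le_one_le)
  have F4: "2 * (t - t') * lP \<ge> (L + ln 2 + \<bar>ln e\<bar>) * (real n + 1)"
  proof -
    have "2 * (t - t') * lP \<ge> 2 * (t - t') * ((L + ln 2 + \<bar>ln e\<bar>) / (2 * (t - t')) * (real n + 1))"
      using gr tt by (intro mult_left_mono) (auto simp: lP_def L_def)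
    then show ?thesis using tt by simp
  qed
  have F5: "(L + ln 2 + \<bar>ln e\<bar>) * (real n + 1) \<ge> real n * L + real (Suc n) * ln 2 + \<bar>ln e\<bar>"
  proof -
    have "(L + ln 2 + \<bar>ln e\<bar>) * (real n + 1) = real n * L + L + (real n + 1) * ln 2 + (real n + 1) * \<bar>ln e\<bar>"
      by (simp add: algebra_simps)
    moreover have "(real n + 1) * \<bar>ln e\<bar> \<ge> 1 * \<bar>ln e\<bar>" by (intro mult_right_mono) auto
    moreover have "real (Suc n) * ln 2 = (real n + 1) * ln 2" by simp
    ultimately show ?thesis using L0 by linarith
  qed
  have "ln Z \<le> ln e"
  proof -
    have e1: "t * (real (Suc n) * ln 2 - (2 * lP + \<sigma>)) = t * (real (Suc n) * ln 2) - 2 * t * lP - t * \<sigma>"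
      by (simp add: algebra_simps)
    have e2: "t' * (2 * lP + \<sigma>) = 2 * t' * lP + t' * \<sigma>" by (simp add: algebra_simps)
    have e3: "2 * (t - t') * lP = 2 * t * lP - 2 * t' * lP" by (simp add: algebra_simps)
    have e4: "(t - t') * \<sigma> = t * \<sigma> - t' * \<sigma>" by (simp add: algebra_simps)
    have e0: "- \<bar>ln e\<bar> \<le> ln e" by simp
    have aux: "\<And>(lz::real) nL lp tA A tl tpl ts tps le ae K.
        lz = nL + lp + (tA - 2*tl - ts) \<Longrightarrow> lp < 2*tpl + tps \<Longrightarrow> 0 \<le> ts - tps \<Longrightarrow> tA \<le> A \<Longrightarrow>
        K \<le> 2*tl - 2*tpl \<Longrightarrow> nL + A + ae \<le> K \<Longrightarrow> -ae \<le> le \<Longrightarrow> lz \<le> le"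
      by linarith
    have a1: "ln Z = real n * L + lP + (t * (real (Suc n) * ln 2) - 2 * (t * lP) - t * \<sigma>)"
      unfolding lnZ by (simp add: algebra_simps)
    have a2: "lP < 2 * (t' * lP) + t' * \<sigma>" using F1 by (simp add: algebra_simps)
    have a3: "0 \<le> t * \<sigma> - t' * \<sigma>" using F2 by (simp add: algebra_simps)
    have a5: "(L + ln 2 + \<bar>ln e\<bar>) * (real n + 1) \<le> 2 * (t * lP) - 2 * (t' * lP)" using F4 by (simp add: algebra_simps)
    show ?thesis by (rule aux[OF a1 a2 a3 F3 a5 F5 e0])
  qed
  then have "Z \<le> e" using Zpos e by simp
  then show ?thesis by (simp add: Z_def)
qed


lemma diam_bound:
  fixes \<delta> :: real and n :: nat
  assumes d: "\<delta> > 0" and gr: "ln (Pp n) \<ge> (ln 2 + \<bar>ln \<delta>\<bar>) / 2 * (real n + 1)"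
  shows "2 ^ n / Pp n ^ 2 \<le> \<delta>"
proof -
  have Pp: "Pp n > 0" by (rule Pp_pos)
  have "ln (2 ^ n / Pp n ^ 2) = real n * ln 2 - 2 * ln (Pp n)"
    using Pp by (simp add: ln_divide_pos ln_realpow)
  also have "\<dots> \<le> ln \<delta>"
  proof -
    have "2 * ln (Pp n) \<ge> (ln 2 + \<bar>ln \<delta>\<bar>) * (real n + 1)" using gr by simp
    moreover have "(ln 2 + \<bar>ln \<delta>\<bar>) * (real n + 1) = real n * ln 2 + ln 2 + (real n + 1) * \<bar>ln \<delta>\<bar>"
      by (simp add: algebra_simps)
    moreover have "(real n + 1) * \<bar>ln \<delta>\<bar> \<ge> 1 * \<bar>ln \<delta>\<bar>" by (intro mult_right_mono) auto
    moreover have "ln (2::real) \<ge> 0" by simp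
    moreover have "- \<bar>ln \<delta>\<bar> \<le> ln \<delta>" by simp
    ultimately show ?thesis by linarith
  qed
  finally show ?thesis using Pp d by simp
qed

lemma H_upper:
  fixes t t' :: real
  assumes tt: "0 \<le> t'" "t' < t" "t < 1"
    and freq: "\<And>n0. \<exists>n\<ge>n0. ln (Pp n) < t' * (2 * ln (Pp n) + ln (real_of_int (s (Suc n))))"
  shows "hausdorff_measure t E = 0"
proof -
  have t0: "t > 0" using tt by simp
  have pre0: "hausdorff_pre t \<delta> E \<le> 0" if d: "\<delta> > 0" for \<delta>
  proof (rule ennreal_le_epsilon)
    fix e :: real assume e: "0 < e"
    define c where "c = max ((ln 2 + \<bar>ln \<delta>\<bar>) / 2) ((ln (real_of_int N) + ln 2 + \<bar>ln e\<bar>) / (2 * (t - t')))"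
    obtain n0 where n0: "\<And>n. n \<ge> n0 \<Longrightarrow> ln (Pp n) \<ge> c * (real n + 1)" using growth[of c] by blast
    obtain n where n: "n \<ge> n0" "ln (Pp n) < t' * (2 * ln (Pp n) + ln (real_of_int (s (Suc n))))"
      using freq[of n0] by blast
    have g1: "ln (Pp n) \<ge> (ln 2 + \<bar>ln \<delta>\<bar>) / 2 * (real n + 1)"
      using n0[OF n(1)] by (smt (verit) c_def max.cobounded1 mult_right_mono of_nat_0_le_iff)
    have g2: "ln (Pp n) \<ge> (ln (real_of_int N) + ln 2 + \<bar>ln e\<bar>) / (2 * (t - t')) * (real n + 1)"
      using n0[OF n(1)] by (smt (verit) c_def max.cobounded2 mult_right_mono of_nat_0_le_iff)
    define sn where "sn = real_of_int (s (Suc n))"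
    have sn4: "sn \<ge> 4" using s_Suc[of n] by (simp add: sn_def)
    define D where "D = Lup n / (sn - 1)"
    have Lup0: "Lup n \<ge> 0" unfolding Lup_def using s_Suc_r by (intro prod_nonneg) (smt (verit) divide_nonneg_nonneg mult_nonneg_nonneg)
    have D0: "D \<ge> 0" using Lup0 sn4 by (simp add: D_def)
    have D_le1: "D \<le> 2 ^ n / Pp n ^ 2"
    proof -
      have "D \<le> Lup n / 1" unfolding D_def using Lup0 sn4 by (intro divide_left_mono) auto
      then show ?thesis using Lup_le[of n] by simp
    qed
    have Dd: "D \<le> \<delta>" using D_le1 diam_bound[OF d g1] by linarith
    have D_le2: "D \<le> 2 ^ Suc n / (Pp n ^ 2 * sn)"
    proof -
      have "1 / (sn - 1) \<le> 2 / sn" using sn4 by (simp add: field_simps)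
      then have "Lup n * (1 / (sn - 1)) \<le> (2 ^ n / Pp n ^ 2) * (2 / sn)"
        using Lup0 Lup_le[of n] sn4 by (intro mult_mono) auto
      then show ?thesis by (simp add: D_def field_simps)
    qed
    have QD: "Q n * D powr t \<le> e"
    proof -
      have "Q n \<le> real_of_int N ^ n * Pp n" unfolding Q_eq using Pp_pos[of n] N_ge
        by (intro mult_right_mono power_mono) auto
      moreover have "D powr t \<le> (2 ^ Suc n / (Pp n ^ 2 * sn)) powr t" using D0 D_le2 t0 by (intro powr_mono2) auto
      ultimately have "Q n * D powr t \<le> real_of_int N ^ n * Pp n * (2 ^ Suc n / (Pp n ^ 2 * sn)) powr t"
        using Q_nonneg[of n] by (intro mult_mono) auto
      also have "\<dots> \<le> e" unfolding sn_def using small_bound[OF tt(1,2) _ e n(2) g2] tt by simp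
      finally show ?thesis .
    qed
    obtain h where h: "bij_betw h {0..<card (W n)} (W n)" using ex_bij_betw_nat_finite[OF finite_W] by blast
    define U where "U i = (if i < card (W n) then {cc (h i) .. cc (h i) + cL (h i) / (sn - 1)} else {})" for i
    have cover: "E \<subseteq> (\<Union>i. U i)"
    proof
      fix x assume x: "x \<in> E"
      define w where "w = pre n x"
      have wW: "w \<in> W n" using pre_W[OF x] by (simp add: w_def)
      then obtain i where i: "i < card (W n)" "h i = w" using h unfolding bij_betw_def by (metis atLeastLessThan_iff imageE)
      have x01: "0 < x" "x \<le> 1" using x by (auto simp: E_def)
      note b = cyl_backward[OF x01, of n]
      define y where "y = (luroth_map ^^ n) x"
      have y01: "0 < y" "y \<le> 1" using b by (auto simp: y_def)
      note st = luroth_step[OF y01]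
      define a where "a = luroth_a1 y"
      have "a = luroth_digit (Suc n) x" by (simp add: a_def y_def luroth_digit_def)
      then have asn: "real_of_int a \<ge> sn" using x by (auto simp: E_def sn_def)
      have "y = 1 / real_of_int a + luroth_map y / (real_of_int a * (real_of_int a - 1))" using st by (simp add: a_def)
      also have "\<dots> \<le> 1 / real_of_int a + 1 / (real_of_int a * (real_of_int a - 1))"
        using st asn sn4 by (intro add_left_mono divide_right_mono) (auto simp: a_def)
      also have "\<dots> = 1 / (real_of_int a - 1)" using asn sn4 by (simp add: field_simps)
      also have "\<dots> \<le> 1 / (sn - 1)" using asn sn4 by (simp add: frac_le)
      finally have ys: "y \<le> 1 / (sn - 1)" .
      have wb: "cL w > 0" using cyl_bounds[OF W_good[OF wW]] by simp
      have "x = cc w + cL w * y" using b by (simp add: w_def y_def)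
      moreover have "cL w * y \<le> cL w * (1 / (sn - 1))" using ys wb by (intro mult_left_mono) auto
      moreover have "cL w * y \<ge> 0" using wb y01 by simp
      ultimately have "x \<in> U i" using i by (simp add: U_def)
      then show "x \<in> (\<Union>i. U i)" by blast
    qed
    have Ub: "bounded (U i)" for i by (simp add: U_def)
    have Udiam: "diameter (U i) \<le> D" for i
    proof (cases "i < card (W n)")
      case True
      then have hW: "h i \<in> W n" using h by (auto simp: bij_betw_def)
      have "cL (h i) / (sn - 1) \<ge> 0" using cyl_bounds[OF W_good[OF hW]] sn4 by simp
      then have "diameter (U i) = cL (h i) / (sn - 1)" using True by (simp add: U_def)
      also have "\<dots> \<le> D" unfolding D_def using cL_upper[OF hW] sn4 by (intro divide_right_mono) auto
      finally show ?thesis .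
    qed (simp add: U_def D0)
    have mem: "U \<in> {U. E \<subseteq> (\<Union>i. U i) \<and> (\<forall>i. bounded (U i) \<and> diameter (U i) \<le> \<delta>)}"
      using cover Ub Udiam Dd by (auto intro: order_trans)
    have "hausdorff_pre t \<delta> E \<le> (\<Sum>i. ennreal (diameter (U i) powr t))"
      unfolding hausdorff_pre_def by (rule INF_lower[OF mem])
    also have "\<dots> = (\<Sum>i<card (W n). ennreal (diameter (U i) powr t))"
      by (rule suminf_finite) (auto simp: U_def)
    also have "\<dots> \<le> (\<Sum>i<card (W n). ennreal (D powr t))"
    proof (rule sum_mono)
      fix i show "ennreal (diameter (U i) powr t) \<le> ennreal (D powr t)"
        using Udiam[of i] diameter_ge_0[OF Ub[of i]] t0 by (intro ennreal_leI powr_mono2) auto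
    qed
    also have "\<dots> = ennreal (Q n * D powr t)" by (simp add: Q_def ennreal_mult' ennreal_of_nat_eq_real_of_nat)
    also have "\<dots> \<le> ennreal e" using QD by (rule ennreal_leI)
    finally show "hausdorff_pre t \<delta> E \<le> 0 + ennreal e" by simp
  qed
  have "hausdorff_measure t E \<le> 0" unfolding hausdorff_measure_def
    by (rule SUP_least) (use pre0 in auto)
  then show ?thesis by simp
qed


definition r :: "nat \<Rightarrow> real" where
  "r n = ln (Pp n) / (2 * ln (Pp n) + ln (real_of_int (s (Suc n))))"

lemma den_pos: "2 * ln (Pp n) + ln (real_of_int (s (Suc n))) > 0"
  using ln_Pp_nonneg[of n] s_Suc_r[of n] by (smt (verit) ln_gt_zero)

lemma r_bounds: "0 \<le> r n" "r n \<le> 1/2"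
proof -
  show "0 \<le> r n" unfolding r_def using den_pos[of n] ln_Pp_nonneg[of n] by simp
  have "ln (real_of_int (s (Suc n))) > 0" using s_Suc_r[of n] by simp
  then have "ln (Pp n) \<le> 1/2 * (2 * ln (Pp n) + ln (real_of_int (s (Suc n))))" by simp
  then show "r n \<le> 1/2" unfolding r_def using den_pos[of n] by (simp add: divide_le_eq)
qed

lemma r_less_iff: "r n < c \<longleftrightarrow> ln (Pp n) < c * (2 * ln (Pp n) + ln (real_of_int (s (Suc n))))"
  unfolding r_def using den_pos[of n] by (simp add: divide_less_eq)

lemma r_gt_iff: "c < r n \<longleftrightarrow> c * (2 * ln (Pp n) + ln (real_of_int (s (Suc n)))) < ln (Pp n)"
  unfolding r_def using den_pos[of n] by (simp add: less_divide_eq)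

lemma f_small:
  fixes t t2 :: real and k :: nat
  assumes tt: "0 < t" "t < t2"
    and rk: "t2 < r k"
    and gr: "ln (Pp k) \<ge> t * ln (real_of_int N) / (t2 - t) * (real k + 1)"
  shows "(real_of_int (s (Suc k)) * Lam k) powr t / Q k \<le> 1"
proof -
  define lP where "lP = ln (Pp k)"
  define \<sigma> where "\<sigma> = ln (real_of_int (s (Suc k)))"
  define L where "L = ln (real_of_int N)"
  define L1 where "L1 = ln (real_of_int N - 1)"
  have Nr: "real_of_int N \<ge> 2" using N_ge by simp
  have L0: "L \<ge> 0" using Nr by (simp add: L_def)
  have L10: "L1 \<ge> 0" using Nr by (simp add: L1_def)
  have sr: "real_of_int (s (Suc k)) \<ge> 4" using s_Suc[of k] by simp
  have \<sigma>0: "\<sigma> \<ge> 0" using sr by (simp add: \<sigma>_def)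
  have Pp: "Pp k > 0" by (rule Pp_pos)
  have lP0: "lP \<ge> 0" using ln_Pp_nonneg by (simp add: lP_def)
  define Z where "Z = (real_of_int (s (Suc k)) * Lam k) powr t / Q k"
  have Lampos: "Lam k > 0" unfolding Lam_eq using Nr Pp by simp
  have Zpos: "Z > 0" using sr Lampos Q_pos[of k] by (simp add: Z_def)
  have lnZ: "ln Z = t * (\<sigma> + 2 * real k * L + 2 * lP) - (real k * L1 + lP)"
  proof -
    have "ln Z = ln ((real_of_int (s (Suc k)) * Lam k) powr t) - ln (Q k)"
      unfolding Z_def by (rule ln_divide_pos) (use sr Lampos Q_pos in auto)
    also have "ln ((real_of_int (s (Suc k)) * Lam k) powr t) = t * (\<sigma> + ln (Lam k))"
      using sr Lampos by (simp add: ln_mult \<sigma>_def)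
    also have "ln (Lam k) = 2 * real k * L + 2 * lP"
      unfolding Lam_eq using Nr Pp by (simp add: ln_mult ln_realpow L_def lP_def)
    also have "ln (Q k) = real k * L1 + lP"
      unfolding Q_eq using Nr Pp by (simp add: ln_mult ln_realpow L1_def lP_def)
    finally show ?thesis by (simp add: add.assoc)
  qed
  have F1: "t2 * (2 * lP + \<sigma>) < lP" using rk r_gt_iff by (simp add: lP_def \<sigma>_def)
  have F2: "t * \<sigma> \<le> t2 * \<sigma>" using tt \<sigma>0 by (intro mult_right_mono) auto
  have F3: "(t2 - t) * lP \<ge> t * L * (real k + 1)"
  proof -
    have "(t2 - t) * lP \<ge> (t2 - t) * (t * L / (t2 - t) * (real k + 1))"
      using gr tt by (intro mult_left_mono) (auto simp: lP_def L_def)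
    then show ?thesis using tt by simp
  qed
  have F4: "t * L * (real k + 1) \<ge> t * L * real k" using tt L0 by (intro mult_left_mono) auto
  have F5: "real k * L1 \<ge> 0" using L10 by simp
  have aux: "\<And>(lz::real) tsg tL tl t2l t2s l kL1 A B.
      lz = tsg + 2 * tL + 2 * tl - (kL1 + l) \<Longrightarrow> 2 * t2l + t2s < l \<Longrightarrow> tsg \<le> t2s \<Longrightarrow>
      A \<le> t2l - tl \<Longrightarrow> B \<le> A \<Longrightarrow> tL = B \<Longrightarrow> 0 \<le> kL1 \<Longrightarrow> lz \<le> 0"
    by linarith
  have a1: "ln Z = t * \<sigma> + 2 * (t * L * real k) + 2 * (t * lP) - (real k * L1 + lP)"
    unfolding lnZ by (simp add: algebra_simps)
  have a2: "2 * (t2 * lP) + t2 * \<sigma> < lP" using F1 by (simp add: algebra_simps)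
  have a4: "t * L * (real k + 1) \<le> t2 * lP - t * lP" using F3 by (simp add: algebra_simps)
  have "ln Z \<le> 0" by (rule aux[OF a1 a2 F2 a4 F4 refl F5])
  then have "Z \<le> 1" using Zpos by simp
  then show ?thesis by (simp add: Z_def)
qed

lemma G_exists:
  fixes t t2 :: real
  assumes tt: "0 < t" "t < t2" and ev: "eventually (\<lambda>k. t2 < r k) sequentially"
  shows "\<exists>G. \<forall>k. (real_of_int (s (Suc k)) * Lam k) powr t / Q k \<le> G"
proof -
  define f where "f k = (real_of_int (s (Suc k)) * Lam k) powr t / Q k" for k
  obtain k1 where k1: "\<And>k. k \<ge> k1 \<Longrightarrow> t2 < r k" using ev unfolding eventually_sequentially by blast
  obtain k2 where k2: "\<And>k. k \<ge> k2 \<Longrightarrow> ln (Pp k) \<ge> t * ln (real_of_int N) / (t2 - t) * (real k + 1)"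
    using growth by blast
  define K where "K = max k1 k2"
  have f0: "f k \<ge> 0" for k using Q_nonneg[of k] by (simp add: f_def)
  have "f k \<le> 1 + (\<Sum>j<K. f j)" for k
  proof (cases "k < K")
    case True
    then have "f k \<le> (\<Sum>j<K. f j)" using f0 by (intro member_le_sum) auto
    then show ?thesis by simp
  next
    case False
    then have "f k \<le> 1" unfolding f_def using f_small[OF tt k1 k2] by (simp add: K_def)
    moreover have "(\<Sum>j<K. f j) \<ge> 0" using f0 by (simp add: sum_nonneg)
    ultimately show ?thesis by simp
  qed
  then show ?thesis unfolding f_def by blast
qed

lemma dim_eq: "hausdorff_dim E = real_of_ereal (liminf (\<lambda>n. ereal (r n)))"
proof -
  define Lf where "Lf = liminf (\<lambda>n. ereal (r n))"
  have Lf0: "ereal 0 \<le> Lf" unfolding Lf_def by (rule Liminf_bounded) (use r_bounds in auto)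
  have Lf1: "Lf \<le> ereal (1/2)" unfolding Lf_def by (rule Liminf_le) (use r_bounds in auto)
  define s0 where "s0 = real_of_ereal Lf"
  have Lfe: "Lf = ereal s0" using Lf0 Lf1 unfolding s0_def by (cases Lf) auto
  have s00: "0 \<le> s0" "s0 \<le> 1/2" using Lf0 Lf1 Lfe by auto
  have low: "hausdorff_measure t E \<noteq> 0" if t: "0 < t" "t < s0" for t
  proof -
    define t2 where "t2 = (t + s0) / 2"
    have "ereal t2 < Lf" using t Lfe by (simp add: t2_def)
    then have ev: "eventually (\<lambda>k. t2 < r k) sequentially" unfolding Lf_def
      using less_LiminfD by fastforce
    obtain G where G: "\<And>k. (real_of_int (s (Suc k)) * Lam k) powr t / Q k \<le> G"
      using G_exists[OF t(1) _ ev] t by (auto simp: t2_def)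
    show ?thesis by (rule H_lower[OF t(1) _ G]) (use t s00 in auto)
  qed
  have up: "hausdorff_measure t E = 0" if t: "s0 < t" for t
  proof -
    define t1 where "t1 = min t ((s0 + 1) / 2)"
    define t' where "t' = (s0 + t1) / 2"
    have "(s0 + 1) / 2 < 1" using s00 by simp
    then have t1: "s0 < t1" "t1 < 1" "t1 \<le> t" using t s00 by (auto simp: t1_def min_def)
    have tt: "0 \<le> t'" "t' < t1" using t1 s00 by (auto simp: t'_def)
    have freq: "\<exists>n\<ge>n0. ln (Pp n) < t' * (2 * ln (Pp n) + ln (real_of_int (s (Suc n))))" for n0
    proof (rule ccontr)
      assume "\<not> ?thesis"
      then have "\<forall>n\<ge>n0. \<not> r n < t'" using r_less_iff by blast
      then have "eventually (\<lambda>n. ereal t' \<le> ereal (r n)) sequentially"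
        unfolding eventually_sequentially by (auto simp: not_less)
      then have "ereal t' \<le> Lf" unfolding Lf_def by (rule Liminf_bounded)
      then show False using Lfe tt t1 by (simp add: t'_def)
    qed
    have "hausdorff_measure t1 E = 0" by (rule H_upper[OF tt t1(2) freq])
    moreover have "hausdorff_measure t E \<le> hausdorff_measure t1 E"
      by (rule hausdorff_measure_mono_exp) (use t1 s00 in auto)
    ultimately show ?thesis by simp
  qed
  define S where "S = {x. 0 \<le> x \<and> hausdorff_measure x E = 0}"
  have "Inf S = s0"
  proof (rule cInf_eq_non_empty)
    have "s0 + 1 \<in> S" using up[of "s0 + 1"] s00 by (simp add: S_def)
    then show "S \<noteq> {}" by blast
  next
    fix x assume x: "x \<in> S"
    show "s0 \<le> x"
    proof (rule ccontr)
      assume "\<not> s0 \<le> x"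
      define t where "t = (x + s0) / 2"
      have t: "0 < t" "t < s0" "x \<le> t" using x \<open>\<not> s0 \<le> x\<close> by (auto simp: S_def t_def)
      have "hausdorff_measure t E \<le> hausdorff_measure x E"
        by (rule hausdorff_measure_mono_exp) (use x t in \<open>auto simp: S_def\<close>)
      then have "hausdorff_measure t E = 0" using x by (simp add: S_def)
      then show False using low[OF t(1,2)] by simp
    qed
  next
    fix y assume y: "\<And>x. x \<in> S \<Longrightarrow> y \<le> x"
    show "y \<le> s0"
    proof (rule ccontr)
      assume "\<not> y \<le> s0"
      then have "(s0 + y) / 2 \<in> S" using up[of "(s0 + y) / 2"] s00 by (auto simp: S_def)
      then show False using y \<open>\<not> y \<le> s0\<close> by fastforce
    qed
  qed
  then show ?thesis unfolding hausdorff_dim_def S_def s0_def Lf_def by simp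
qed

end


theorem lemma3p1:
  fixes s :: "nat \<Rightarrow> int" and N :: int
  assumes s_ge: "\<And>n. n \<ge> 1 \<Longrightarrow> s n \<ge> 4"
    and s_lim: "filterlim s at_top sequentially"
    and N_ge: "N \<ge> 2"
  shows "hausdorff_dim {x :: real. 0 < x \<and> x \<le> 1 \<and>
            (\<forall>n\<ge>1. s n \<le> luroth_digit n x \<and> luroth_digit n x \<le> N * s n - 1)}
         = real_of_ereal (liminf (\<lambda>n. ereal (ln (\<Prod>i=1..n. real_of_int (s i)) /
              (2 * ln (\<Prod>i=1..n. real_of_int (s i)) + ln (real_of_int (s (n + 1)))))))"
proof -
  have L: "lur2 s N" using s_ge s_lim N_ge by unfold_locales auto
  have Eeq: "{x :: real. 0 < x \<and> x \<le> 1 \<and>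
            (\<forall>n\<ge>1. s n \<le> luroth_digit n x \<and> luroth_digit n x \<le> N * s n - 1)} = lur.E s N"
    by (simp add: lur.E_def[OF lur2.axioms(1)[OF L]])
  have P: "(\<Prod>i=Suc 0..n. real_of_int (s i)) = lur.Pp s n" for n
    by (simp add: lur.Pp_def[OF lur2.axioms(1)[OF L]] prod.atLeast1_atMost_eq)
  have req: "(\<lambda>n. ereal (ln (\<Prod>i=1..n. real_of_int (s i)) /
              (2 * ln (\<Prod>i=1..n. real_of_int (s i)) + ln (real_of_int (s (n + 1))))))
           = (\<lambda>n. ereal (lur2.r s n))"
    by (simp add: P lur2.r_def[OF L])
  show ?thesis unfolding Eeq req by (rule lur2.dim_eq[OF L])
qed

end
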